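(* If $\bar\alpha,\bar\beta\in\{0,1\}^k$ and $\bar\alpha\ne\bar\beta$, then $F_{\bar\alpha}\cap F_{\bar\beta}=\varnothing$, $$d_H(F_{\bar\alpha},F_{\bar\beta})<\frac{3\sqrt5}{5^{|\bar\alpha\wedge\bar\beta|}},\qquad d(F_{\bar\alpha},F_{\bar\beta})\ge\frac{1}{5^{|\bar\alpha\wedge\bar\beta|+1}}.$$
   Context: Let $I=[0,1]^3$. Let $\mathcal D_0=\{(i,2,2),(2,i,2),(2,2,i): i=0,1,2,3,4\}$ and $\mathcal D_1=\{d\in\{0,\ldots,4\}^3:\ \text{at least two coordinates of } d \text{ lie in }\{0,4\}\}$. For $i=0,1$ let $T_i(A)=\bigcup_{d\in\mathcal D_i}\frac{d+A}{5}$, and for $\bar\alpha=\alpha_1\cdots\alpha_k$ let $F_{\bar\alpha}=T_{\alpha_1}\circ\cdots\circ T_{\alpha_k}(I)$. $|\bar\alpha\wedge\bar\beta|$ denotes the length of the longest common initial segment of $\bar\alpha$ and $\bar\beta$. $d_H$ is the Hausdorff distance and $d(A,B)=\inf\{|a-b|:a\in A,b\in B\}$. *)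

theory Defs
  imports "HOL-Analysis.Analysis"
begin

definition pt3 :: "nat \<Rightarrow> nat \<Rightarrow> nat \<Rightarrow> real^3" where
  "pt3 a b c = vector [real a, real b, real c]"

definition unit_cube :: "(real^3) set" where
  "unit_cube = cbox 0 1"

definition D0 :: "(real^3) set" where
  "D0 = {pt3 i 2 2 | i. i \<le> 4} \<union> {pt3 2 i 2 | i. i \<le> 4} \<union> {pt3 2 2 i | i. i \<le> 4}"

definition D1 :: "(real^3) set" where
  "D1 = {pt3 a b c | a b c. a \<le> 4 \<and> b \<le> 4 \<and> c \<le> 4 \<and>
          ((a \<in> {0,4} \<and> b \<in> {0,4}) \<or> (a \<in> {0,4} \<and> c \<in> {0,4}) \<or> (b \<in> {0,4} \<and> c \<in> {0,4}))}"

definition Tmap :: "(real^3) set \<Rightarrow> (real^3) set \<Rightarrow> (real^3) set" where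
  "Tmap D A = (\<Union>d\<in>D. (\<lambda>x. (1/5) *\<^sub>R (d + x)) ` A)"

definition T :: "nat \<Rightarrow> (real^3) set \<Rightarrow> (real^3) set" where
  "T i = (if i = 0 then Tmap D0 else Tmap D1)"

definition F :: "nat list \<Rightarrow> (real^3) set" where
  "F \<alpha> = foldr T \<alpha> unit_cube"

fun common_prefix_len :: "'a list \<Rightarrow> 'a list \<Rightarrow> nat" where
  "common_prefix_len (x # xs) (y # ys) = (if x = y then Suc (common_prefix_len xs ys) else 0)"
| "common_prefix_len _ _ = 0"

definition hausdorff_dist :: "'a::metric_space set \<Rightarrow> 'a set \<Rightarrow> real" where
  "hausdorff_dist A B = max (SUP a\<in>A. infdist a B) (SUP b\<in>B. infdist b A)"

end

theory Submission imports Defs begin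

lemma pt3_nth: "pt3 a b c $ 1 = real a" "pt3 a b c $ 2 = real b" "pt3 a b c $ 3 = real c"
  by (simp_all add: pt3_def)

definition Dg :: "nat \<Rightarrow> (real^3) set" where "Dg c = (if c = 0 then D0 else D1)"

lemma T_Dg: "T c = Tmap (Dg c)" by (simp add: T_def Dg_def)

lemma D_bounds: "d \<in> Dg c \<Longrightarrow> (d $ i \<in> \<int> \<and> 0 \<le> d $ i \<and> d $ i \<le> 4)"
  using exhaust_3[of i]
  by (auto simp: Dg_def D0_def D1_def pt3_nth split: if_splits)

lemma D_nonempty: "Dg c \<noteq> {}"
proof -
  have "pt3 2 2 2 \<in> D0" unfolding D0_def by fastforce
  moreover have "pt3 0 0 0 \<in> D1" unfolding D1_def by fastforce
  ultimately show ?thesis by (auto simp: Dg_def)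
qed

lemma ex_3: "(\<exists>i::3. P i) \<longleftrightarrow> P 1 \<or> P 2 \<or> P 3"
  using forall_3[of "\<lambda>i. \<not> P i"] by blast

lemma D_sep: "d \<in> D0 \<Longrightarrow> d' \<in> D1 \<Longrightarrow> \<exists>i. d $ i = 2 \<and> (d' $ i = 0 \<or> d' $ i = 4)"
  unfolding D0_def D1_def ex_3
  by (auto simp: pt3_nth)

lemma D_sep2:
  assumes "x \<noteq> y" "x \<in> {0,1}" "y \<in> {0,1}" "d \<in> Dg x" "d' \<in> Dg y"
  shows "\<exists>i. \<bar>d $ i - d' $ i\<bar> = 2"
proof (cases "x = 0")
  case True
  then have "y = 1" using assms by auto
  then obtain i where "d $ i = 2 \<and> (d' $ i = 0 \<or> d' $ i = 4)"
    using D_sep[of d d'] assms True by (auto simp: Dg_def)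
  then show ?thesis by (intro exI[of _ i]) auto
next
  case False
  then have "y = 0" "x = 1" using assms by auto
  then obtain i where "d' $ i = 2 \<and> (d $ i = 0 \<or> d $ i = 4)"
    using D_sep[of d' d] assms by (auto simp: Dg_def)
  then show ?thesis by (intro exI[of _ i]) auto
qed

fun Vs :: "nat list \<Rightarrow> (real^3) set" where
  "Vs [] = {0}"
| "Vs (c # g) = {(5 ^ length g) *\<^sub>R d + v | d v. d \<in> Dg c \<and> v \<in> Vs g}"

lemma scal_id: "(1/5) *\<^sub>R (d + (1 / 5 ^ m) *\<^sub>R (v + x)) =
   (1 / 5 ^ Suc m) *\<^sub>R ((5 ^ m) *\<^sub>R d + v + (x::real^3))"
  by (simp add: algebra_simps)

lemma G_repr: "foldr T g A = (\<Union>v\<in>Vs g. (\<lambda>x. (1 / 5 ^ length g) *\<^sub>R (v + x)) ` A)"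
proof (induction g)
  case Nil
  then show ?case by simp
next
  case (Cons c g)
  have "foldr T (c # g) A = Tmap (Dg c) (foldr T g A)" by (simp add: T_Dg)
  also have "\<dots> = (\<Union>v\<in>Vs (c # g). (\<lambda>x. (1 / 5 ^ length (c # g)) *\<^sub>R (v + x)) ` A)"
    unfolding Cons Tmap_def
  proof (intro equalityI subsetI)
    fix p assume "p \<in> (\<Union>d\<in>Dg c. (\<lambda>x. (1/5) *\<^sub>R (d + x)) `
        (\<Union>v\<in>Vs g. (\<lambda>x. (1 / 5 ^ length g) *\<^sub>R (v + x)) ` A))"
    then obtain d v x where "d \<in> Dg c" "v \<in> Vs g" "x \<in> A"
      and p: "p = (1/5) *\<^sub>R (d + (1 / 5 ^ length g) *\<^sub>R (v + x))" by auto
    then have mem: "(5 ^ length g) *\<^sub>R d + v \<in> Vs (c # g)" by auto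
    show "p \<in> (\<Union>v\<in>Vs (c # g). (\<lambda>x. (1 / 5 ^ length (c # g)) *\<^sub>R (v + x)) ` A)"
      unfolding p scal_id by (rule UN_I[OF mem], rule rev_image_eqI[OF \<open>x \<in> A\<close>]) simp
  next
    fix p assume "p \<in> (\<Union>v\<in>Vs (c # g). (\<lambda>x. (1 / 5 ^ length (c # g)) *\<^sub>R (v + x)) ` A)"
    then obtain d v x where "d \<in> Dg c" "v \<in> Vs g" "x \<in> A"
      and p: "p = (1 / 5 ^ Suc (length g)) *\<^sub>R ((5 ^ length g) *\<^sub>R d + v + x)" by (auto simp: add.assoc)
    then show "p \<in> (\<Union>d\<in>Dg c. (\<lambda>x. (1/5) *\<^sub>R (d + x)) `
        (\<Union>v\<in>Vs g. (\<lambda>x. (1 / 5 ^ length g) *\<^sub>R (v + x)) ` A))"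
      unfolding p scal_id[symmetric] by blast
  qed
  finally show ?case .
qed

lemma Vs_int: "v \<in> Vs g \<Longrightarrow> v $ i \<in> \<int>"
proof (induction g arbitrary: v)
  case Nil
  then show ?case by simp
next
  case (Cons c g)
  then obtain d w where "v = (5 ^ length g) *\<^sub>R d + w" "d \<in> Dg c" "w \<in> Vs g" by auto
  then show ?case using D_bounds[of d c i] Cons.IH[of w] by auto
qed

lemma T_sub: "A \<subseteq> unit_cube \<Longrightarrow> T c A \<subseteq> unit_cube"
  unfolding T_Dg Tmap_def
proof clarify
  fix d x assume A: "A \<subseteq> unit_cube" and d: "d \<in> Dg c" and x: "x \<in> A"
  have "\<forall>i. 0 \<le> x $ i \<and> x $ i \<le> 1" using A x by (auto simp: unit_cube_def mem_box_cart)
  have "0 \<le> ((1/5) *\<^sub>R (d + x)) $ i \<and> ((1/5) *\<^sub>R (d + x)) $ i \<le> 1" for i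
  proof -
    have "0 \<le> x $ i" "x $ i \<le> 1" using \<open>\<forall>i. 0 \<le> x $ i \<and> x $ i \<le> 1\<close> by auto
    moreover have "0 \<le> d $ i" "d $ i \<le> 4" using D_bounds[OF d, of i] by auto
    ultimately show ?thesis by simp
  qed
  then show "(1/5) *\<^sub>R (d + x) \<in> unit_cube"
    by (simp add: unit_cube_def mem_box_cart)
qed

lemma T_ne: "A \<noteq> {} \<Longrightarrow> T c A \<noteq> {}"
  using D_nonempty[of c] by (auto simp: T_Dg Tmap_def)

lemma F_sub: "F g \<subseteq> unit_cube"
  by (induction g) (auto simp: F_def intro!: T_sub)

lemma cube_ne: "unit_cube \<noteq> {}"
proof -
  have "0 \<in> unit_cube" by (simp add: unit_cube_def mem_box_cart)
  then show ?thesis by auto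
qed

lemma F_ne: "F g \<noteq> {}"
  by (induction g) (auto simp: F_def cube_ne T_ne)

lemma split_prefix: "length a = length b \<Longrightarrow> a \<noteq> b \<Longrightarrow>
  \<exists>g x y a' b'. a = g @ x # a' \<and> b = g @ y # b' \<and> x \<noteq> y \<and> common_prefix_len a b = length g"
proof (induction a arbitrary: b)
  case Nil
  then show ?case by simp
next
  case (Cons x a)
  then obtain y b1 where b: "b = y # b1" by (cases b) auto
  show ?case
  proof (cases "x = y")
    case True
    have "\<exists>g x' y' a' b'. a = g @ x' # a' \<and> b1 = g @ y' # b' \<and> x' \<noteq> y' \<and> common_prefix_len a b1 = length g"
      using Cons.IH[of b1] Cons.prems b True by auto
    then obtain g x' y' a' b' where "a = g @ x' # a' \<and> b1 = g @ y' # b' \<and> x' \<noteq> y' \<and> common_prefix_len a b1 = length g"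
      by blast
    then show ?thesis using True b by (intro exI[of _ "x # g"]) auto
  next
    case False
    then show ?thesis using b by (intro exI[of _ "[]"]) auto
  qed
qed

lemma arith_key:
  fixes n e t :: real
  assumes "n \<in> \<int>" "\<bar>e\<bar> = 2" "\<bar>t\<bar> \<le> 1"
  shows "1 \<le> \<bar>5 * n + e + t\<bar>"
proof -
  obtain k where k: "n = of_int k" using assms(1) Ints_cases by blast
  consider "k \<ge> 1" | "k = 0" | "k \<le> -1" by linarith
  then show ?thesis
  proof cases
    case 1 then have "n \<ge> 1" using k by simp
    then show ?thesis using assms by linarith
  next
    case 2 then show ?thesis using assms k by linarith
  next
    case 3 then have "n \<le> -1" using k by simp
    then show ?thesis using assms by linarith
  qed
qed

lemma norm_cube: "a \<in> unit_cube \<Longrightarrow> b \<in> unit_cube \<Longrightarrow> norm (a - b) \<le> 3"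
proof -
  assume a: "a \<in> unit_cube" and b: "b \<in> unit_cube"
  have "\<bar>(a - b) $ i\<bar> \<le> 1" for i
  proof -
    have "0 \<le> a $ i" "a $ i \<le> 1" "0 \<le> b $ i" "b $ i \<le> 1"
      using a b by (auto simp: unit_cube_def mem_box_cart)
    then show ?thesis by simp
  qed
  then have "sum (\<lambda>i. \<bar>(a - b) $ i\<bar>) UNIV \<le> of_nat (card (UNIV::3 set)) * 1"
    by (intro sum_bounded_above) auto
  then show ?thesis using norm_le_l1_cart[of "a - b"] by simp
qed

lemma infdist_bound:
  assumes "A \<subseteq> unit_cube" "B \<subseteq> unit_cube" "B \<noteq> {}" "p \<in> foldr T g A"
  shows "infdist p (foldr T g B) \<le> 3 / 5 ^ length g"
proof -
  obtain v a where v: "v \<in> Vs g" and a: "a \<in> A" and p: "p = (1 / 5 ^ length g) *\<^sub>R (v + a)"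
    using assms(4) unfolding G_repr by auto
  obtain b where b: "b \<in> B" using assms(3) by auto
  let ?q = "(1 / 5 ^ length g) *\<^sub>R (v + b)"
  have q: "?q \<in> foldr T g B" unfolding G_repr using v b by auto
  have "dist p ?q = (1 / 5 ^ length g) * norm (a - b)"
    unfolding p dist_norm by (simp add: algebra_simps flip: scaleR_diff_right)
  also have "\<dots> \<le> (1 / 5 ^ length g) * 3"
    using norm_cube[of a b] a b assms by (intro mult_left_mono) auto
  finally show ?thesis using infdist_le[OF q, of p] by simp
qed

lemma sep_point:
  assumes "x \<noteq> y" "x \<in> {0,1}" "y \<in> {0,1}"
    and p: "p \<in> foldr T g (T x (F a'))" and q: "q \<in> foldr T g (T y (F b'))"
  shows "1 / 5 ^ (length g + 1) \<le> dist p q"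
proof -
  let ?m = "length g"
  obtain v a0 where v: "v \<in> Vs g" and a0: "a0 \<in> T x (F a')" and pv: "p = (1 / 5 ^ ?m) *\<^sub>R (v + a0)"
    using p unfolding G_repr by auto
  obtain w b0 where w: "w \<in> Vs g" and b0: "b0 \<in> T y (F b')" and qw: "q = (1 / 5 ^ ?m) *\<^sub>R (w + b0)"
    using q unfolding G_repr by auto
  obtain d x0 where d: "d \<in> Dg x" and x0: "x0 \<in> F a'" and a0e: "a0 = (1/5) *\<^sub>R (d + x0)"
    using a0 by (auto simp: T_Dg Tmap_def)
  obtain d' y0 where d': "d' \<in> Dg y" and y0: "y0 \<in> F b'" and b0e: "b0 = (1/5) *\<^sub>R (d' + y0)"
    using b0 by (auto simp: T_Dg Tmap_def)
  obtain i where i: "\<bar>d $ i - d' $ i\<bar> = 2" using D_sep2[OF assms(1-3) d d'] by blast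
  have x0c: "0 \<le> x0 $ i" "x0 $ i \<le> 1" using x0 F_sub[of a'] by (auto simp: unit_cube_def mem_box_cart)
  have y0c: "0 \<le> y0 $ i" "y0 $ i \<le> 1" using y0 F_sub[of b'] by (auto simp: unit_cube_def mem_box_cart)
  have t: "\<bar>x0 $ i - y0 $ i\<bar> \<le> 1" using x0c y0c by simp
  have n: "v $ i - w $ i \<in> \<int>" using Vs_int[OF v] Vs_int[OF w] by auto
  have eq: "(p - q) $ i = (1 / 5 ^ (?m + 1)) * (5 * (v $ i - w $ i) + (d $ i - d' $ i) + (x0 $ i - y0 $ i))"
    unfolding pv qw a0e b0e by (simp add: field_simps)
  have "1 / 5 ^ (?m + 1) \<le> (1 / 5 ^ (?m + 1)) * \<bar>5 * (v $ i - w $ i) + (d $ i - d' $ i) + (x0 $ i - y0 $ i)\<bar>"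
    using mult_left_mono[OF arith_key[OF n i t], of "1 / 5 ^ (?m + 1)"] by simp
  also have "\<dots> = \<bar>(p - q) $ i\<bar>" unfolding eq by (simp add: abs_mult)
  also have "\<dots> \<le> norm (p - q)" by (rule component_le_norm_cart)
  finally show ?thesis by (simp add: dist_norm)
qed

theorem lemma2:
  fixes \<alpha> \<beta> :: "nat list" and k :: nat
  assumes "length \<alpha> = k" and "length \<beta> = k"
    and "set \<alpha> \<subseteq> {0, 1}" and "set \<beta> \<subseteq> {0, 1}"
    and "\<alpha> \<noteq> \<beta>"
  shows "F \<alpha> \<inter> F \<beta> = {}
      \<and> hausdorff_dist (F \<alpha>) (F \<beta>) < 3 * sqrt 5 / 5 ^ common_prefix_len \<alpha> \<beta>
      \<and> setdist (F \<alpha>) (F \<beta>) \<ge> 1 / 5 ^ (common_prefix_len \<alpha> \<beta> + 1)"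
proof -
  obtain g x y a' b' where ea: "\<alpha> = g @ x # a'" and eb: "\<beta> = g @ y # b'" and xy: "x \<noteq> y"
    and cp: "common_prefix_len \<alpha> \<beta> = length g"
  proof -
    have "length \<alpha> = length \<beta>" using assms by simp
    from split_prefix[OF this assms(5)] show ?thesis using that by blast
  qed
  have x01: "x \<in> {0,1}" "y \<in> {0,1}" using assms(3,4) ea eb by auto
  have Fa: "F \<alpha> = foldr T g (T x (F a'))" by (simp add: ea F_def)
  have Fb: "F \<beta> = foldr T g (T y (F b'))" by (simp add: eb F_def)
  have sep: "1 / 5 ^ (length g + 1) \<le> dist p q" if "p \<in> F \<alpha>" "q \<in> F \<beta>" for p q
    using sep_point[OF xy x01, of p g a' q b'] that Fa Fb by simp
  have disj: "F \<alpha> \<inter> F \<beta> = {}"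
  proof (rule ccontr)
    assume "F \<alpha> \<inter> F \<beta> \<noteq> {}"
    then obtain p where "p \<in> F \<alpha>" "p \<in> F \<beta>" by auto
    from sep[OF this] have "1 / 5 ^ (length g + 1) \<le> (0::real)" by simp
    moreover have "(0::real) < 1 / 5 ^ (length g + 1)" by simp
    ultimately show False by linarith
  qed
  have sd: "1 / 5 ^ (length g + 1) \<le> setdist (F \<alpha>) (F \<beta>)"
    using sep F_ne by (intro le_setdistI) blast+
  have A1: "T x (F a') \<subseteq> unit_cube" "T x (F a') \<noteq> {}" by (auto simp: T_sub F_sub T_ne F_ne)
  have B1: "T y (F b') \<subseteq> unit_cube" "T y (F b') \<noteq> {}" by (auto simp: T_sub F_sub T_ne F_ne)
  have h1: "(SUP a\<in>F \<alpha>. infdist a (F \<beta>)) \<le> 3 / 5 ^ length g"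
    using F_ne[of \<alpha>] infdist_bound[OF A1(1) B1] unfolding Fa Fb
    by (intro cSUP_least) auto
  have h2: "(SUP b\<in>F \<beta>. infdist b (F \<alpha>)) \<le> 3 / 5 ^ length g"
    using F_ne[of \<beta>] infdist_bound[OF B1(1) A1] unfolding Fa Fb
    by (intro cSUP_least) auto
  have "hausdorff_dist (F \<alpha>) (F \<beta>) \<le> 3 / 5 ^ length g"
    using h1 h2 by (simp add: hausdorff_dist_def)
  also have "\<dots> < 3 * sqrt 5 / 5 ^ length g"
  proof -
    have "1 < sqrt (5::real)" by simp
    then show ?thesis by (intro divide_strict_right_mono) auto
  qed
  finally show ?thesis using disj sd cp by simp
qed

end
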